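(* Let $m\in\mathbb{N}$ and $V\in H_{+}^{-m}$ be a 1-periodic complex-valued distribution. Define on $L_2(0,1)$ the forms $t_V^{\pm}[u,v]=\langle V(x)u,v\rangle_{\pm}$ and $\tau_\pm[u,v]=\langle D_\pm^{2m}u,v\rangle_\pm$, both with domain $H_\pm^m$. Then $t_V^{\pm}$ is $\tau_\pm$-bounded with relative bound zero: for every $\delta>0$ there exists a constant $C_\delta\ge0$ such that $$|t_V^{\pm}[u]|\le\delta\,\tau_\pm[u]+C_\delta\|u\|^2_{L_2(0,1)},\qquad u\in H_\pm^m.$$
   Context: For $s\in\mathbb{R}$, $H_{+}^{s}$ is the space of formal series $f=\sum_{k\in\mathbb{Z}}\widehat f(2k)e^{i2k\pi x}$ with $\|f\|_{H_+^s}^2=\sum_k\langle 2k\rangle^{2s}|\widehat f(2k)|^2<\infty$, and $H_{-}^{s}$ is the space of formal series $f=\sum_{k}\widehat f(2k+1)e^{i(2k+1)\pi x}$ with $\|f\|_{H_-^s}^2=\sum_k\langle 2k+1\rangle^{2s}|\widehat f(2k+1)|^2<\infty$, where $\langle k\rangle=1+|k|$; $H_\pm^0=L_2(0,1)$. $\langle\cdot,\cdot\rangle_{\pm}$ is the pairing between $H_\pm^{s}$ and $H_\pm^{-s}$ extending the $L_2(0,1)$ inner product. $D_\pm^{2m}$ acts as multiplication by $(n\pi)^{2m}$ on the mode $e^{in\pi x}$. For $u\in H_\pm^{m}$, $V(x)u=\sum_n\big(\sum_j\widehat V(n-j)\widehat u(j)\big)e^{in\pi x}\in H_\pm^{-m}$.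 For a form $t$, $t[u]:=t[u,u]$. *)

theory Defs
  imports "HOL-Analysis.Analysis"
begin

text \<open>A formal trigonometric series \<open>\<Sum>\<^sub>n f\<^sup>^(n) e^{i n \<pi> x}\<close> is represented by its
  coefficient function \<open>f :: int \<Rightarrow> complex\<close>, with \<open>f n = f\<^sup>^(n)\<close>.
  \<open>\<langle>k\<rangle> = 1 + |k|\<close>.\<close>

definition jbr :: "int \<Rightarrow> real" where
  "jbr k = 1 + \<bar>real_of_int k\<bar>"

definition H_plus :: "real \<Rightarrow> (int \<Rightarrow> complex) set" where
  "H_plus s = {f. (\<forall>n. odd n \<longrightarrow> f n = 0) \<and>
      (\<lambda>n. jbr n powr (2 * s) * (cmod (f n))\<^sup>2) summable_on UNIV}"

definition H_minus :: "real \<Rightarrow> (int \<Rightarrow> complex) set" where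
  "H_minus s = {f. (\<forall>n. even n \<longrightarrow> f n = 0) \<and>
      (\<lambda>n. jbr n powr (2 * s) * (cmod (f n))\<^sup>2) summable_on UNIV}"

text \<open>Pairing extending the \<open>L\<^sub>2(0,1)\<close> inner product (Parseval, the modes
  \<open>e^{in\<pi>x}\<close> of one parity are orthonormal in \<open>L\<^sub>2(0,1)\<close>).\<close>
definition pairing :: "(int \<Rightarrow> complex) \<Rightarrow> (int \<Rightarrow> complex) \<Rightarrow> complex" where
  "pairing f g = (\<Sum>\<^sub>\<infinity>n. f n * cnj (g n))"

text \<open>Multiplication \<open>V(x)u\<close>: \<open>(Vu)\<^sup>^(n) = \<Sum>\<^sub>j V\<^sup>^(n-j) u\<^sup>^(j)\<close>.\<close>
definition mult_op :: "(int \<Rightarrow> complex) \<Rightarrow> (int \<Rightarrow> complex) \<Rightarrow> (int \<Rightarrow> complex)" where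
  "mult_op V u = (\<lambda>n. \<Sum>\<^sub>\<infinity>j. V (n - j) * u j)"

definition D_pow :: "nat \<Rightarrow> (int \<Rightarrow> complex) \<Rightarrow> (int \<Rightarrow> complex)" where
  "D_pow m u = (\<lambda>n. complex_of_real ((real_of_int n * pi) ^ (2 * m)) * u n)"

text \<open>The forms \<open>t\<^sub>V[u] = \<langle>V u, u\<rangle>\<close> and \<open>\<tau>[u] = \<langle>D\<^sup>2\<^sup>m u, u\<rangle>\<close> (the latter is real,
  we take its real part), and \<open>\<parallel>u\<parallel>\<^sup>2\<^sub>L\<^sub>2 = \<langle>u,u\<rangle>\<close>.\<close>
definition t_form :: "(int \<Rightarrow> complex) \<Rightarrow> (int \<Rightarrow> complex) \<Rightarrow> complex" where
  "t_form V u = pairing (mult_op V u) u"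

definition tau_form :: "nat \<Rightarrow> (int \<Rightarrow> complex) \<Rightarrow> real" where
  "tau_form m u = Re (pairing (D_pow m u) u)"

definition L2_normsq :: "(int \<Rightarrow> complex) \<Rightarrow> real" where
  "L2_normsq u = (\<Sum>\<^sub>\<infinity>n. (cmod (u n))\<^sup>2)"

end

theory Submission
  imports Defs
begin


lemma div_mult_back: "(y::real) \<noteq> 0 \<Longrightarrow> a = a / y * y"
  by (rule nonzero_eq_divide_eq[THEN iffD1, symmetric]) auto

lemma inv_sq_pow: "(inverse ((x::real) ^ m))^2 = inverse (x ^ (2*m))"
  by (metis power_inverse power_mult mult.commute)
lemma sq2: "(x::real) ^ (2*m) = (x^m)^2"
  by (metis power_mult mult.commute)

lemma lin_comb:
  fixes S R P Q1 Q2 l1 l2 AS kt1 kt2 kz kw :: real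
  shows "S \<le> R \<Longrightarrow> R = P + Q1 + Q2 \<Longrightarrow> P = (l1 + l2) / 2 \<Longrightarrow> Q1 = kt1 \<Longrightarrow> Q2 = kt2
   \<Longrightarrow> l1 \<le> AS \<Longrightarrow> l2 \<le> AS \<Longrightarrow> kt1 \<le> kz \<Longrightarrow> kt2 \<le> kz \<Longrightarrow> kz \<le> kw \<Longrightarrow> S \<le> AS + 2 * kw"
  by argo

lemma jbr_ge1: "jbr k \<ge> 1" by (simp add: jbr_def)
lemma jbr_pos: "jbr k > 0" by (simp add: jbr_def)
lemma jbr_diff: "jbr (n - j) \<le> jbr n + jbr j" by (simp add: jbr_def)

lemma pow_sum_le: fixes x y :: real assumes "x \<ge> 0" "y \<ge> 0"
  shows "(x + y) ^ m \<le> 2 ^ m * (x ^ m + y ^ m)"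
proof -
  have "(x + y) ^ m \<le> (2 * max x y) ^ m" by (rule power_mono) (use assms in auto)
  also have "\<dots> = 2 ^ m * max x y ^ m" by (simp add: power_mult_distrib)
  also have "max x y ^ m \<le> x ^ m + y ^ m" using assms by (auto simp: max_def)
  hence "2 ^ m * max x y ^ m \<le> 2 ^ m * (x ^ m + y ^ m)" by simp
  finally show ?thesis .
qed

lemma jbr_pow_bound: "jbr n ^ (2*m) \<le> 4 ^ m * (1 + (real_of_int n * pi) ^ (2*m))"
proof -
  have "jbr n ^ (2*m) = (1 + \<bar>real_of_int n\<bar>) ^ (2*m)" by (simp add: jbr_def)
  also have "\<dots> \<le> 2 ^ (2*m) * (1 ^ (2*m) + \<bar>real_of_int n\<bar> ^ (2*m))" by (rule pow_sum_le) auto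
  also have "\<bar>real_of_int n\<bar> ^ (2*m) \<le> (\<bar>real_of_int n\<bar> * pi) ^ (2*m)"
  proof (rule power_mono)
    have "1 \<le> pi" using pi_ge_two by simp
    thus "\<bar>real_of_int n\<bar> \<le> \<bar>real_of_int n\<bar> * pi" by (simp add: mult_le_cancel_left1)
  qed simp
  also have "(\<bar>real_of_int n\<bar> * pi) ^ (2*m) = (real_of_int n * pi) ^ (2*m)"
    by (simp add: power_mult power_mult_distrib)
  finally show ?thesis by (simp add: power_mult)
qed

lemma key_sum:
  fixes w :: "int \<Rightarrow> int \<Rightarrow> real" and X b :: "int \<Rightarrow> real"
  assumes "finite F" "\<And>n j. w n j \<ge> 0" "\<And>n. X n \<ge> 0" "\<And>n. b n \<ge> 0"
    "\<And>j. (\<Sum>n\<in>F. (w n j)^2) \<le> e^2" "e \<ge> 0"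
  shows "(\<Sum>n\<in>F. \<Sum>j\<in>F. w n j * X n * b j) \<le> e * sqrt (\<Sum>n\<in>F. (X n)^2) * (\<Sum>j\<in>F. b j)"
proof -
  have "(\<Sum>n\<in>F. \<Sum>j\<in>F. w n j * X n * b j) = (\<Sum>j\<in>F. b j * (\<Sum>n\<in>F. w n j * X n))"
    by (subst sum.swap) (simp add: sum_distrib_left mult_ac)
  also have "\<dots> \<le> (\<Sum>j\<in>F. b j * (e * sqrt (\<Sum>n\<in>F. (X n)^2)))"
  proof (rule sum_mono, rule mult_left_mono)
    fix j
    have "(\<Sum>n\<in>F. w n j * X n)^2 \<le> (\<Sum>n\<in>F. (w n j)^2) * (\<Sum>n\<in>F. (X n)^2)"
      by (rule Cauchy_Schwarz_ineq_sum)
    also have "\<dots> \<le> e^2 * (\<Sum>n\<in>F. (X n)^2)"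
      by (rule mult_right_mono) (use assms in \<open>auto intro: sum_nonneg\<close>)
    finally have "\<bar>\<Sum>n\<in>F. w n j * X n\<bar> \<le> sqrt (e^2 * (\<Sum>n\<in>F. (X n)^2))"
      using real_le_rsqrt real_sqrt_abs by (metis real_sqrt_le_mono)
    thus "(\<Sum>n\<in>F. w n j * X n) \<le> e * sqrt (\<Sum>n\<in>F. (X n)^2)"
      using assms(6) by (simp add: real_sqrt_mult)
  qed (use assms in auto)
  also have "\<dots> = e * sqrt (\<Sum>n\<in>F. (X n)^2) * (\<Sum>j\<in>F. b j)"
    by (simp add: sum_distrib_left sum_distrib_right mult_ac)
  finally show ?thesis .
qed

lemma sum_b_bound:
  fixes q X :: "int \<Rightarrow> real"
  shows "(\<Sum>j\<in>F. q j * X j) \<le> sqrt (\<Sum>j\<in>F. (q j)^2) * sqrt (\<Sum>j\<in>F. (X j)^2)"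
proof -
  have "(\<Sum>j\<in>F. q j * X j)^2 \<le> (\<Sum>j\<in>F. (q j)^2) * (\<Sum>j\<in>F. (X j)^2)"
    by (rule Cauchy_Schwarz_ineq_sum)
  hence "\<bar>\<Sum>j\<in>F. q j * X j\<bar> \<le> sqrt ((\<Sum>j\<in>F. (q j)^2) * (\<Sum>j\<in>F. (X j)^2))"
    by (metis real_sqrt_abs real_sqrt_le_mono)
  thus ?thesis by (simp add: real_sqrt_mult)
qed

lemma shift_sum_le:
  fixes a :: "int \<Rightarrow> real"
  assumes "inj g" "finite F" "finite E" "\<And>k. a k \<ge> 0"
  shows "(\<Sum>x\<in>F. if g x \<in> E then a (g x) else 0) \<le> sum a E"
proof -
  have "(\<Sum>x\<in>F. if g x \<in> E then a (g x) else 0) = (\<Sum>x\<in>{x\<in>F. g x \<in> E}. a (g x))"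
    using assms(2) by (simp add: sum.inter_filter)
  also have "\<dots> = sum a (g ` {x\<in>F. g x \<in> E})"
    by (subst sum.reindex) (use assms(1) in \<open>auto intro: inj_on_subset\<close>)
  also have "\<dots> \<le> sum a E" by (rule sum_mono2) (use assms in auto)
  finally show ?thesis .
qed

lemma shift_sq_le:
  fixes c :: "int \<Rightarrow> real"
  assumes "inj g" "finite F" "\<And>G. finite G \<Longrightarrow> G \<inter> E = {} \<Longrightarrow> (\<Sum>k\<in>G. (c k)^2) \<le> r"
  shows "(\<Sum>x\<in>F. (if g x \<in> E then 0 else c (g x))^2) \<le> r"
proof -
  have "(\<Sum>x\<in>F. (if g x \<in> E then 0 else c (g x))^2) = (\<Sum>x\<in>{x\<in>F. g x \<notin> E}. (c (g x))^2)"
    using assms(2) by (subst sum.inter_filter) (auto intro!: sum.cong)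
  also have "\<dots> = (\<Sum>k\<in>g ` {x\<in>F. g x \<notin> E}. (c k)^2)"
    by (subst sum.reindex) (use assms(1) in \<open>auto intro: inj_on_subset\<close>)
  also have "\<dots> \<le> r" by (rule assms(3)) (use assms in auto)
  finally show ?thesis .
qed


lemma jbr_inv_summable: "(\<lambda>k. inverse (jbr k ^ 2)) summable_on UNIV"
proof -
  have s0: "summable (\<lambda>n::nat. inverse (real n ^ 2))" by (rule inverse_power_summable) simp
  have "summable (\<lambda>n::nat. inverse (real (Suc n) ^ 2))"
    using s0 by (subst summable_Suc_iff)
  hence s1: "summable (\<lambda>n::nat. norm (inverse ((real n + 1) ^ 2)))" by (simp add: add.commute)
  have s: "(\<lambda>n::nat. inverse ((real n + 1) ^ 2)) summable_on UNIV"
    by (rule norm_summable_imp_summable_on[OF s1])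
  have a: "(\<lambda>k. inverse (jbr k ^ 2)) summable_on (int ` UNIV)"
    by (subst summable_on_reindex) (use s in \<open>auto simp: o_def jbr_def add.commute\<close>)
  have b: "(\<lambda>k. inverse (jbr k ^ 2)) summable_on ((\<lambda>n. - int n) ` UNIV)"
    by (subst summable_on_reindex) (use s in \<open>auto simp: o_def jbr_def add.commute inj_on_def\<close>)
  have u: "int ` UNIV \<union> (\<lambda>n. - int n) ` UNIV = UNIV"
  proof -
    have "k \<in> int ` UNIV \<union> (\<lambda>n. - int n) ` UNIV" for k :: int
    proof (cases "k \<ge> 0")
      case True thus ?thesis by (auto intro: image_eqI[of _ _ "nat k"])
    next
      case False thus ?thesis by (intro UnI2 image_eqI[of _ _ "nat (-k)"]) auto
    qed
    thus ?thesis by auto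
  qed
  show ?thesis using summable_on_union[OF a b] u by simp
qed


lemma finite_est:
  fixes a b :: "int \<Rightarrow> real" and E F :: "int set"
  assumes m: "m \<ge> 1" and fF: "finite F" and fE: "finite E"
    and a0: "\<And>k. a k \<ge> 0" and b0: "\<And>k. b k \<ge> 0" and e0: "\<epsilon> \<ge> 0"
    and hc: "\<And>G. finite G \<Longrightarrow> G \<inter> E = {} \<Longrightarrow> (\<Sum>k\<in>G. (a k / jbr k ^ m)^2) \<le> \<epsilon>^2"
    and hS: "(\<Sum>k\<in>F. inverse (jbr k ^ 2)) \<le> S2"
  shows "(\<Sum>n\<in>F. \<Sum>j\<in>F. a (n - j) * b j * b n)
     \<le> sum a E * (\<Sum>n\<in>F. (b n)^2) + 2 ^ (m+1) * \<epsilon> * sqrt S2 *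
         (4 ^ m * ((\<Sum>n\<in>F. (b n)^2) + (\<Sum>n\<in>F. (real_of_int n * pi) ^ (2*m) * (b n)^2)))"
proof -
  define c where "c k = a k / jbr k ^ m" for k
  define c' where "c' k = (if k \<in> E then 0 else c k)" for k
  define X where "X n = jbr n ^ m * b n" for n
  define ind where "ind k = (if k \<in> E then a k else 0)" for k
  define A where "A = sum a E"
  define SX where "SX = (\<Sum>n\<in>F. (X n)^2)"
  define SB where "SB = (\<Sum>n\<in>F. (b n)^2)"
  have c0: "c k \<ge> 0" for k using a0 jbr_pos[of k] by (simp add: c_def)
  have c'0: "c' k \<ge> 0" for k using c0 by (simp add: c'_def)
  have X0: "X n \<ge> 0" for n using b0 jbr_pos[of n] by (simp add: X_def)
  have ind0: "ind k \<ge> 0" for k using a0 by (simp add: ind_def)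
  have pw: "a (n - j) * b j * b n \<le> ind (n - j) * ((b j)^2 + (b n)^2) / 2
      + 2 ^ m * (c' (n - j) * X n * b j) + 2 ^ m * (c' (n - j) * X j * b n)" for n j
  proof (cases "n - j \<in> E")
    case True
    have "b j * b n \<le> ((b j)^2 + (b n)^2) / 2"
      using sum_squares_ge_zero[of "b j - b n" 0] by (simp add: power2_eq_square algebra_simps)
    hence "a (n - j) * (b j * b n) \<le> a (n - j) * (((b j)^2 + (b n)^2) / 2)"
      by (rule mult_left_mono) (rule a0)
    moreover have "0 \<le> 2 ^ m * (c' (n - j) * X n * b j) + 2 ^ m * (c' (n - j) * X j * b n)"
      using c'0 X0 b0 by simp
    ultimately show ?thesis using True by (simp add: ind_def mult_ac)
  next
    case False
    have jp: "jbr (n - j) ^ m > 0" using jbr_pos by simp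
    have jn: "jbr (n - j) ^ m \<noteq> 0" using jp by linarith
    have "a (n - j) = c (n - j) * jbr (n - j) ^ m" unfolding c_def using jn by (rule div_mult_back)
    also have "\<dots> \<le> c (n - j) * (2 ^ m * (jbr n ^ m + jbr j ^ m))"
    proof (rule mult_left_mono[OF _ c0])
      have "jbr (n - j) ^ m \<le> (jbr n + jbr j) ^ m"
        by (rule power_mono[OF jbr_diff]) (use jbr_pos[of "n-j"] in simp)
      also have "\<dots> \<le> 2 ^ m * (jbr n ^ m + jbr j ^ m)"
        by (rule pow_sum_le) (use jbr_pos in \<open>auto intro: less_imp_le\<close>)
      finally show "jbr (n - j) ^ m \<le> 2 ^ m * (jbr n ^ m + jbr j ^ m)" .
    qed
    finally have "a (n - j) * (b j * b n) \<le> c (n - j) * (2 ^ m * (jbr n ^ m + jbr j ^ m)) * (b j * b n)"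
      by (rule mult_right_mono) (use b0 in simp)
    also have "\<dots> = 2 ^ m * (c' (n - j) * X n * b j) + 2 ^ m * (c' (n - j) * X j * b n)"
      using False by (simp add: c'_def X_def algebra_simps)
    finally show ?thesis using False by (simp add: ind_def mult_ac)
  qed
  have st1: "(\<Sum>n\<in>F. \<Sum>j\<in>F. a (n - j) * b j * b n) \<le> (\<Sum>n\<in>F. \<Sum>j\<in>F. ind (n - j) * ((b j)^2 + (b n)^2) / 2
      + 2 ^ m * (c' (n - j) * X n * b j) + 2 ^ m * (c' (n - j) * X j * b n))"
    by (intro sum_mono pw)
  have st2: "(\<Sum>n\<in>F. \<Sum>j\<in>F. ind (n - j) * ((b j)^2 + (b n)^2) / 2
      + 2 ^ m * (c' (n - j) * X n * b j) + 2 ^ m * (c' (n - j) * X j * b n))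
    = (\<Sum>n\<in>F. \<Sum>j\<in>F. ind (n - j) * ((b j)^2 + (b n)^2) / 2)
      + (\<Sum>n\<in>F. \<Sum>j\<in>F. 2 ^ m * (c' (n - j) * X n * b j)) + (\<Sum>n\<in>F. \<Sum>j\<in>F. 2 ^ m * (c' (n - j) * X j * b n))"
    by (simp only: sum.distrib)
  have st3: "(\<Sum>n\<in>F. \<Sum>j\<in>F. ind (n - j) * ((b j)^2 + (b n)^2) / 2)
     = ((\<Sum>n\<in>F. \<Sum>j\<in>F. ind (n - j) * (b j)^2) + (\<Sum>n\<in>F. \<Sum>j\<in>F. ind (n - j) * (b n)^2)) / 2"
    by (simp only: sum_divide_distrib[symmetric] sum.distrib[symmetric] distrib_left)
  have st4: "(\<Sum>n\<in>F. \<Sum>j\<in>F. 2 ^ m * (c' (n - j) * X n * b j)) = 2 ^ m * (\<Sum>n\<in>F. \<Sum>j\<in>F. c' (n - j) * X n * b j)"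
    by (simp only: sum_distrib_left)
  have st5: "(\<Sum>n\<in>F. \<Sum>j\<in>F. 2 ^ m * (c' (n - j) * X j * b n)) = 2 ^ m * (\<Sum>j\<in>F. \<Sum>n\<in>F. c' (n - j) * X j * b n)"
    by (subst sum.swap) (simp only: sum_distrib_left)
  have L1: "(\<Sum>n\<in>F. \<Sum>j\<in>F. ind (n - j) * (b j)^2) \<le> A * SB"
  proof -
    have "(\<Sum>n\<in>F. \<Sum>j\<in>F. ind (n - j) * (b j)^2) = (\<Sum>j\<in>F. (b j)^2 * (\<Sum>n\<in>F. ind (n - j)))"
      by (subst sum.swap) (simp add: sum_distrib_left mult_ac)
    also have "\<dots> \<le> (\<Sum>j\<in>F. (b j)^2 * A)"
    proof (intro sum_mono mult_left_mono)
      fix j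
      show "(\<Sum>n\<in>F. ind (n - j)) \<le> A" unfolding ind_def A_def
        by (rule shift_sum_le[of "\<lambda>n. n - j"]) (use fF fE a0 in \<open>auto simp: inj_def\<close>)
    qed simp
    finally show ?thesis by (simp add: SB_def sum_distrib_left mult_ac)
  qed
  have L2: "(\<Sum>n\<in>F. \<Sum>j\<in>F. ind (n - j) * (b n)^2) \<le> A * SB"
  proof -
    have "(\<Sum>n\<in>F. \<Sum>j\<in>F. ind (n - j) * (b n)^2) = (\<Sum>n\<in>F. (b n)^2 * (\<Sum>j\<in>F. ind (n - j)))"
      by (simp add: sum_distrib_left mult_ac)
    also have "\<dots> \<le> (\<Sum>n\<in>F. (b n)^2 * A)"
    proof (intro sum_mono mult_left_mono)
      fix n
      show "(\<Sum>j\<in>F. ind (n - j)) \<le> A" unfolding ind_def A_def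
        by (rule shift_sum_le[of "\<lambda>j. n - j"]) (use fF fE a0 in \<open>auto simp: inj_def\<close>)
    qed simp
    finally show ?thesis by (simp add: SB_def sum_distrib_left mult_ac)
  qed
  have sB: "(\<Sum>j\<in>F. b j) \<le> sqrt S2 * sqrt SX"
  proof -
    have "(\<Sum>j\<in>F. b j) = (\<Sum>j\<in>F. inverse (jbr j ^ m) * X j)"
    proof (intro sum.cong refl)
      fix j
      have "jbr j ^ m \<noteq> 0" using jbr_pos[of j] by simp
      thus "b j = inverse (jbr j ^ m) * X j" unfolding X_def by (metis left_inverse mult.assoc mult_1_left)
    qed
    also have "\<dots> \<le> sqrt (\<Sum>j\<in>F. (inverse (jbr j ^ m))^2) * sqrt SX"
      unfolding SX_def by (rule sum_b_bound)
    also have "(\<Sum>j\<in>F. (inverse (jbr j ^ m))^2) \<le> S2"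
    proof -
      have "(inverse (jbr j ^ m))^2 \<le> inverse (jbr j ^ 2)" for j
      proof -
        have "jbr j ^ 2 \<le> jbr j ^ (2*m)" by (rule power_increasing) (use m jbr_ge1 in auto)
        hence "inverse (jbr j ^ (2*m)) \<le> inverse (jbr j ^ 2)"
          using jbr_pos[of j] by (intro le_imp_inverse_le) auto
        thus ?thesis by (simp only: inv_sq_pow)
      qed
      hence "(\<Sum>j\<in>F. (inverse (jbr j ^ m))^2) \<le> (\<Sum>j\<in>F. inverse (jbr j ^ 2))" by (rule sum_mono)
      thus ?thesis using hS by linarith
    qed
    hence "sqrt (\<Sum>j\<in>F. (inverse (jbr j ^ m))^2) * sqrt SX \<le> sqrt S2 * sqrt SX"
      using X0 by (intro mult_right_mono) (auto simp: SX_def intro: sum_nonneg)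
    finally show ?thesis .
  qed
  have SX0: "SX \<ge> 0" unfolding SX_def by (intro sum_nonneg) simp
  have hc': "(\<Sum>x\<in>F. (c' (g x))^2) \<le> \<epsilon>^2" if "inj g" for g
    unfolding c'_def by (rule shift_sq_le[OF that fF]) (use hc in \<open>auto simp: c_def\<close>)
  have T1: "(\<Sum>n\<in>F. \<Sum>j\<in>F. c' (n - j) * X n * b j) \<le> \<epsilon> * sqrt S2 * SX"
  proof -
    have "(\<Sum>n\<in>F. \<Sum>j\<in>F. c' (n - j) * X n * b j) \<le> \<epsilon> * sqrt SX * (\<Sum>j\<in>F. b j)"
      unfolding SX_def
      by (rule key_sum[OF fF c'0 X0 b0 _ e0]) (rule hc', auto simp: inj_def)
    also have "\<dots> \<le> \<epsilon> * sqrt SX * (sqrt S2 * sqrt SX)"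
      by (rule mult_left_mono[OF sB]) (use e0 SX0 in simp)
    also have "\<dots> = \<epsilon> * sqrt S2 * SX" using SX0 by (simp add: mult_ac)
    finally show ?thesis .
  qed
  have T2: "(\<Sum>j\<in>F. \<Sum>n\<in>F. c' (n - j) * X j * b n) \<le> \<epsilon> * sqrt S2 * SX"
  proof -
    have "(\<Sum>j\<in>F. \<Sum>n\<in>F. c' (n - j) * X j * b n) \<le> \<epsilon> * sqrt SX * (\<Sum>j\<in>F. b j)"
      unfolding SX_def
      by (rule key_sum[where w="\<lambda>j n. c' (n - j)", OF fF c'0 X0 b0 _ e0]) (rule hc', auto simp: inj_def)
    also have "\<dots> \<le> \<epsilon> * sqrt SX * (sqrt S2 * sqrt SX)"
      by (rule mult_left_mono[OF sB]) (use e0 SX0 in simp)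
    also have "\<dots> = \<epsilon> * sqrt S2 * SX" using SX0 by (simp add: mult_ac)
    finally show ?thesis .
  qed
  have SXb: "SX \<le> 4 ^ m * (SB + (\<Sum>n\<in>F. (real_of_int n * pi) ^ (2*m) * (b n)^2))"
  proof -
    have "SX = (\<Sum>n\<in>F. jbr n ^ (2*m) * (b n)^2)"
      unfolding SX_def X_def by (simp only: power_mult_distrib sq2)
    also have "\<dots> \<le> (\<Sum>n\<in>F. 4 ^ m * (1 + (real_of_int n * pi) ^ (2*m)) * (b n)^2)"
      by (intro sum_mono mult_right_mono jbr_pow_bound) simp
    also have "\<dots> = 4 ^ m * (SB + (\<Sum>n\<in>F. (real_of_int n * pi) ^ (2*m) * (b n)^2))"
      by (simp add: SB_def sum_distrib_left sum.distrib algebra_simps)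
    finally show ?thesis .
  qed
  have eS: "0 \<le> \<epsilon> * sqrt S2"
  proof -
    have "0 \<le> (\<Sum>k\<in>F. inverse (jbr k ^ 2))" using jbr_pos by (intro sum_nonneg) auto
    thus ?thesis using hS e0 by simp
  qed
  have fin: "2 ^ m * (\<epsilon> * sqrt S2 * SX) \<le> 2 ^ m * (\<epsilon> * sqrt S2 * (4 ^ m * (SB + (\<Sum>n\<in>F. (real_of_int n * pi) ^ (2*m) * (b n)^2))))"
    using SXb eS by (intro mult_left_mono) auto
  have m1: "2 ^ m * (\<Sum>n\<in>F. \<Sum>j\<in>F. c' (n - j) * X n * b j) \<le> 2 ^ m * (\<epsilon> * sqrt S2 * SX)"
    using T1 by (intro mult_left_mono) auto
  have m2: "2 ^ m * (\<Sum>j\<in>F. \<Sum>n\<in>F. c' (n - j) * X j * b n) \<le> 2 ^ m * (\<epsilon> * sqrt S2 * SX)"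
    using T2 by (intro mult_left_mono) auto
  have eq: "2 ^ (m+1) * \<epsilon> * sqrt S2 * (4 ^ m * (SB + (\<Sum>n\<in>F. (real_of_int n * pi) ^ (2*m) * (b n)^2)))
     = 2 * (2 ^ m * (\<epsilon> * sqrt S2 * (4 ^ m * (SB + (\<Sum>n\<in>F. (real_of_int n * pi) ^ (2*m) * (b n)^2)))))"
    by (simp add: mult_ac)
  have fin2: "(\<Sum>n\<in>F. \<Sum>j\<in>F. a (n - j) * b j * b n) \<le> A * SB + 2 ^ (m+1) * \<epsilon> * sqrt S2 *
         (4 ^ m * (SB + (\<Sum>n\<in>F. (real_of_int n * pi) ^ (2*m) * (b n)^2)))"
    unfolding eq by (rule lin_comb[OF st1 st2 st3 st4 st5 L1 L2 m1 m2 fin])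
  thus ?thesis by (simp only: A_def SB_def)
qed


lemma jbr_powr_pos: "jbr n powr (2 * real m) = jbr n ^ (2*m)"
proof -
  have "jbr n powr (2 * real m) = jbr n powr real (2*m)" by simp
  also have "\<dots> = jbr n ^ (2*m)" using jbr_pos[of n] by (rule powr_realpow)
  finally show ?thesis .
qed

lemma jbr_powr_neg: "jbr n powr (2 * - real m) = inverse (jbr n ^ (2*m))"
proof -
  have "jbr n powr (2 * - real m) = jbr n powr (- real (2*m))" by simp
  also have "\<dots> = inverse (jbr n powr real (2*m))" by (rule powr_minus)
  also have "\<dots> = inverse (jbr n ^ (2*m))" using jbr_pos[of n] by (simp only: powr_realpow)
  finally show ?thesis .
qed

lemma c_sq_eq: "(a / jbr k ^ m)^2 = jbr k powr (2 * - real m) * a^2"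
  unfolding jbr_powr_neg inv_sq_pow[symmetric] by (simp only: power_mult_distrib divide_inverse mult.commute)

lemma tail_small:
  fixes f :: "int \<Rightarrow> real"
  assumes "f summable_on UNIV" "\<And>k. f k \<ge> 0" "r > 0"
  obtains E where "finite E" "\<And>G. finite G \<Longrightarrow> G \<inter> E = {} \<Longrightarrow> sum f G \<le> r"
proof -
  let ?I = "infsum f UNIV"
  have "\<forall>\<^sub>F E in finite_subsets_at_top UNIV. dist (sum f E) ?I < r"
    using infsum_tendsto[OF assms(1)] assms(3) tendsto_iff by blast
  then obtain E where fE: "finite E" and hE: "dist (sum f E) ?I < r"
    unfolding eventually_finite_subsets_at_top by blast
  show ?thesis
  proof (rule that[OF fE])
    fix G assume fG: "finite G" and d: "G \<inter> E = {}"
    have "sum f (G \<union> E) \<le> ?I"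
      by (rule finite_sum_le_infsum) (use assms fG fE in auto)
    moreover have "sum f (G \<union> E) = sum f G + sum f E" using fG fE d by (simp add: sum.union_disjoint)
    moreover have "?I - sum f E < r" using hE by (simp add: dist_real_def)
    ultimately show "sum f G \<le> r" by linarith
  qed
qed



lemma u_facts:
  fixes u :: "int \<Rightarrow> complex"
  assumes hu: "(\<lambda>n. jbr n powr (2 * real m) * (cmod (u n))\<^sup>2) summable_on UNIV"
  shows "(\<lambda>n. (cmod (u n))^2) summable_on UNIV"
    and "(\<lambda>n. (real_of_int n * pi) ^ (2*m) * (cmod (u n))^2) summable_on UNIV"
    and "tau_form m u = infsum (\<lambda>n. (real_of_int n * pi) ^ (2*m) * (cmod (u n))^2) UNIV"
    and "L2_normsq u = infsum (\<lambda>n. (cmod (u n))^2) UNIV"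
proof -
  have hu': "(\<lambda>n. jbr n ^ (2*m) * (cmod (u n))\<^sup>2) summable_on UNIV"
    using hu by (simp only: jbr_powr_pos)
  show s1: "(\<lambda>n. (cmod (u n))^2) summable_on UNIV"
  proof (rule summable_on_comparison_test[OF hu'])
    fix n
    have "1 \<le> jbr n ^ (2*m)" using jbr_ge1[of n] by (rule one_le_power)
    thus "(cmod (u n))^2 \<le> jbr n ^ (2*m) * (cmod (u n))\<^sup>2"
      using mult_right_mono[of 1 "jbr n ^ (2*m)" "(cmod (u n))^2"] by simp
  qed simp
  have hu2: "(\<lambda>n. pi ^ (2*m) * (jbr n ^ (2*m) * (cmod (u n))\<^sup>2)) summable_on UNIV"
    using hu' by (rule summable_on_cmult_right)
  show s2: "(\<lambda>n. (real_of_int n * pi) ^ (2*m) * (cmod (u n))^2) summable_on UNIV"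
  proof (rule summable_on_comparison_test[OF hu2])
    fix n
    have ab: "\<bar>real_of_int n\<bar> * pi = \<bar>real_of_int n * pi\<bar>" by (simp add: abs_mult)
    have "(real_of_int n * pi) ^ (2*m) = (\<bar>real_of_int n\<bar> * pi) ^ (2*m)"
      unfolding ab by (rule power_even_abs[symmetric]) simp
    also have "\<dots> \<le> (jbr n * pi) ^ (2*m)"
      by (rule power_mono) (auto simp: jbr_def intro!: mult_right_mono)
    also have "\<dots> = pi ^ (2*m) * jbr n ^ (2*m)" by (simp add: power_mult_distrib)
    finally have "(real_of_int n * pi) ^ (2*m) \<le> pi ^ (2*m) * jbr n ^ (2*m)" .
    hence "(real_of_int n * pi) ^ (2*m) * (cmod (u n))^2 \<le> pi ^ (2*m) * jbr n ^ (2*m) * (cmod (u n))^2"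
      by (rule mult_right_mono) simp
    thus "(real_of_int n * pi) ^ (2*m) * (cmod (u n))^2 \<le> pi ^ (2*m) * (jbr n ^ (2*m) * (cmod (u n))\<^sup>2)"
      by (simp add: mult.assoc)
  next
    fix n show "0 \<le> (real_of_int n * pi) ^ (2*m) * (cmod (u n))^2"
      by (intro mult_nonneg_nonneg zero_le_even_power) auto
  qed
  have eqD: "D_pow m u n * cnj (u n) = complex_of_real ((real_of_int n * pi) ^ (2*m) * (cmod (u n))^2)" for n
    unfolding D_pow_def by (simp only: mult.assoc complex_norm_square[symmetric] of_real_mult)
  show "tau_form m u = infsum (\<lambda>n. (real_of_int n * pi) ^ (2*m) * (cmod (u n))^2) UNIV"
  proof -
    have "tau_form m u = Re (infsum (\<lambda>n. complex_of_real ((real_of_int n * pi) ^ (2*m) * (cmod (u n))^2)) UNIV)"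
      unfolding tau_form_def pairing_def eqD ..
    also have "\<dots> = infsum (\<lambda>n. Re (complex_of_real ((real_of_int n * pi) ^ (2*m) * (cmod (u n))^2))) UNIV"
      by (rule infsum_Re[symmetric]) (rule summable_on_of_real[OF s2])
    finally show ?thesis by simp
  qed
  show "L2_normsq u = infsum (\<lambda>n. (cmod (u n))^2) UNIV" by (simp add: L2_normsq_def)
qed



lemma main_bound:
  fixes m :: nat and V :: "int \<Rightarrow> complex" and \<delta> :: real
  assumes m: "m \<ge> 1"
    and hV: "(\<lambda>k. jbr k powr (2 * - real m) * (cmod (V k))^2) summable_on UNIV"
    and d: "\<delta> > 0"
  shows "\<exists>C\<ge>0. \<forall>u. (\<lambda>n. jbr n powr (2 * real m) * (cmod (u n))\<^sup>2) summable_on UNIV \<longrightarrow>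
           cmod (t_form V u) \<le> \<delta> * tau_form m u + C * L2_normsq u"
proof -
  define S2 where "S2 = infsum (\<lambda>k. inverse (jbr k ^ 2)) UNIV"
  define \<epsilon> where "\<epsilon> = \<delta> / (2 ^ (m+1) * sqrt (S2 + 1) * 4 ^ m)"
  have S20: "S2 \<ge> 0" unfolding S2_def by (rule infsum_nonneg) simp
  have den: "2 ^ (m+1) * sqrt (S2 + 1) * 4 ^ m > (0::real)" using S20 by simp
  have e0: "\<epsilon> > 0" unfolding \<epsilon>_def using d den by simp
  have coef: "2 ^ (m+1) * \<epsilon> * sqrt (S2 + 1) * 4 ^ m = \<delta>"
    unfolding \<epsilon>_def using den S20 by (simp add: field_simps)
  have cs: "(\<lambda>k. (cmod (V k) / jbr k ^ m)^2) summable_on UNIV"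
    using hV by (simp only: c_sq_eq)
  obtain E where fE: "finite E"
    and hE: "\<And>G. finite G \<Longrightarrow> G \<inter> E = {} \<Longrightarrow> (\<Sum>k\<in>G. (cmod (V k) / jbr k ^ m)^2) \<le> \<epsilon>^2"
    using tail_small[OF cs _, of "\<epsilon>^2"] e0 by auto
  define A where "A = sum (\<lambda>k. cmod (V k)) E"
  define C where "C = A + \<delta>"
  have A0: "A \<ge> 0" unfolding A_def by (intro sum_nonneg) simp
  show ?thesis
  proof (intro exI[of _ C] conjI allI impI)
    show "C \<ge> 0" unfolding C_def using A0 d by simp
    fix u :: "int \<Rightarrow> complex"
    assume hu: "(\<lambda>n. jbr n powr (2 * real m) * (cmod (u n))\<^sup>2) summable_on UNIV"
    define a where "a k = cmod (V k)" for k
    define b where "b n = cmod (u n)" for n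
    define L where "L = infsum (\<lambda>n. (b n)^2) UNIV"
    define T where "T = infsum (\<lambda>n. (real_of_int n * pi) ^ (2*m) * (b n)^2) UNIV"
    have sL: "(\<lambda>n. (b n)^2) summable_on UNIV" unfolding b_def by (rule u_facts(1)[OF hu])
    have sT: "(\<lambda>n. (real_of_int n * pi) ^ (2*m) * (b n)^2) summable_on UNIV"
      unfolding b_def by (rule u_facts(2)[OF hu])
    have tauT: "tau_form m u = T" unfolding T_def b_def by (rule u_facts(3)[OF hu])
    have L2L: "L2_normsq u = L" unfolding L_def b_def by (rule u_facts(4)[OF hu])
    define K where "K = \<delta> * T + C * L"
    have finb: "(\<Sum>n\<in>F. \<Sum>j\<in>F. a (n - j) * b j * b n) \<le> K" if fF: "finite F" for F
    proof -
      have hS: "(\<Sum>k\<in>F. inverse (jbr k ^ 2)) \<le> S2 + 1"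
      proof -
        have "(\<Sum>k\<in>F. inverse (jbr k ^ 2)) \<le> S2" unfolding S2_def
          by (rule finite_sum_le_infsum[OF jbr_inv_summable fF]) auto
        thus ?thesis by simp
      qed
      have est: "(\<Sum>n\<in>F. \<Sum>j\<in>F. a (n - j) * b j * b n)
        \<le> sum a E * (\<Sum>n\<in>F. (b n)^2) + 2 ^ (m+1) * \<epsilon> * sqrt (S2 + 1) *
         (4 ^ m * ((\<Sum>n\<in>F. (b n)^2) + (\<Sum>n\<in>F. (real_of_int n * pi) ^ (2*m) * (b n)^2)))"
        by (rule finite_est[OF m fF fE _ _ _ _ hS]) (use e0 hE in \<open>auto simp: a_def b_def\<close>)
      have r: "2 ^ (m+1) * \<epsilon> * sqrt (S2 + 1) * (4 ^ m * X) = \<delta> * X" for X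
      proof -
        have "2 ^ (m+1) * \<epsilon> * sqrt (S2 + 1) * (4 ^ m * X) = (2 ^ (m+1) * \<epsilon> * sqrt (S2 + 1) * 4 ^ m) * X"
          by (simp only: mult.assoc)
        thus ?thesis by (simp only: coef)
      qed
      have SBL: "(\<Sum>n\<in>F. (b n)^2) \<le> L" unfolding L_def
        by (rule finite_sum_le_infsum[OF sL fF]) auto
      have STT: "(\<Sum>n\<in>F. (real_of_int n * pi) ^ (2*m) * (b n)^2) \<le> T" unfolding T_def
        by (rule finite_sum_le_infsum[OF sT fF]) (auto intro!: mult_nonneg_nonneg zero_le_even_power)
      have aA: "sum a E = A" unfolding A_def a_def ..
      have "A * (\<Sum>n\<in>F. (b n)^2) \<le> A * L" using SBL A0 by (rule mult_left_mono)
      moreover have "\<delta> * ((\<Sum>n\<in>F. (b n)^2) + (\<Sum>n\<in>F. (real_of_int n * pi) ^ (2*m) * (b n)^2)) \<le> \<delta> * (L + T)"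
        using SBL STT d by (intro mult_left_mono) auto
      ultimately show ?thesis using est unfolding r aA K_def C_def by argo
    qed
    define g where "g p = a (fst p - snd p) * b (snd p) * b (fst p)" for p
    have g0: "g p \<ge> 0" for p by (simp add: g_def a_def b_def)
    have gfin: "sum g P \<le> K" if "finite P" for P
    proof -
      define F where "F = fst ` P \<union> snd ` P"
      have fF: "finite F" using that by (simp add: F_def)
      have "sum g P \<le> sum g (F \<times> F)"
        by (rule sum_mono2) (use fF g0 in \<open>auto simp: F_def intro: rev_image_eqI\<close>)
      also have "\<dots> = (\<Sum>n\<in>F. \<Sum>j\<in>F. a (n - j) * b j * b n)"
        by (simp add: sum.cartesian_product g_def split_beta)
      also have "\<dots> \<le> K" by (rule finb[OF fF])
      finally show ?thesis .
    qed
    have gs: "g summable_on UNIV"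
      by (rule nonneg_bdd_above_summable_on) (use g0 gfin in \<open>auto intro!: bdd_aboveI[where M=K]\<close>)
    have gK: "infsum g UNIV \<le> K"
      by (rule infsum_le_finite_sums[OF gs]) (use gfin in auto)
    define h where "h p = V (fst p - snd p) * u (snd p) * cnj (u (fst p))" for p
    have nh: "norm (h p) = g p" for p by (simp add: h_def g_def a_def b_def norm_mult)
    have habs: "(\<lambda>p. norm (h p)) summable_on UNIV" using gs by (simp add: nh)
    have hs: "h summable_on (Sigma UNIV (\<lambda>_. UNIV))" using abs_summable_summable[OF habs] by simp
    have "t_form V u = infsum (\<lambda>n. infsum (\<lambda>j. h (n, j)) UNIV) UNIV"
      unfolding t_form_def pairing_def mult_op_def h_def
      by (simp add: infsum_cmult_left')
    also have "\<dots> = infsum h (Sigma UNIV (\<lambda>_. UNIV))"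
      by (rule infsum_Sigma_banach[OF hs])
    finally have tf: "t_form V u = infsum h UNIV" by simp
    have "cmod (t_form V u) \<le> infsum (\<lambda>p. norm (h p)) UNIV"
      unfolding tf by (rule norm_infsum_bound[OF habs])
    also have "\<dots> = infsum g UNIV" by (simp add: nh)
    also have "\<dots> \<le> K" by (rule gK)
    finally show "cmod (t_form V u) \<le> \<delta> * tau_form m u + C * L2_normsq u"
      unfolding tauT L2L K_def .
  qed
qed


theorem proposition1:
  fixes m :: nat and V :: "int \<Rightarrow> complex"
  assumes "m \<ge> 1"
    and "V \<in> H_plus (- real m)"
  shows "(\<forall>\<delta>>0. \<exists>C\<ge>0. \<forall>u\<in>H_plus (real m).
            cmod (t_form V u) \<le> \<delta> * tau_form m u + C * L2_normsq u)
       \<and> (\<forall>\<delta>>0. \<exists>C\<ge>0. \<forall>u\<in>H_minus (real m).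
            cmod (t_form V u) \<le> \<delta> * tau_form m u + C * L2_normsq u)"
proof -
  have hV: "(\<lambda>k. jbr k powr (2 * - real m) * (cmod (V k))^2) summable_on UNIV"
    using assms(2) by (simp add: H_plus_def)
  have M: "\<exists>C\<ge>0. \<forall>u. (\<lambda>n. jbr n powr (2 * real m) * (cmod (u n))\<^sup>2) summable_on UNIV \<longrightarrow>
           cmod (t_form V u) \<le> \<delta> * tau_form m u + C * L2_normsq u" if "\<delta> > 0" for \<delta>
    by (rule main_bound[OF assms(1) hV that])
  show ?thesis
  proof (intro conjI allI impI)
    fix \<delta> :: real assume d: "\<delta> > 0"
    from M[OF d] obtain C where C: "C \<ge> 0" and hC: "\<forall>u. (\<lambda>n. jbr n powr (2 * real m) * (cmod (u n))\<^sup>2) summable_on UNIV \<longrightarrow>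
           cmod (t_form V u) \<le> \<delta> * tau_form m u + C * L2_normsq u" by blast
    show "\<exists>C\<ge>0. \<forall>u\<in>H_plus (real m). cmod (t_form V u) \<le> \<delta> * tau_form m u + C * L2_normsq u"
      using C hC by (auto simp: H_plus_def)
    show "\<exists>C\<ge>0. \<forall>u\<in>H_minus (real m). cmod (t_form V u) \<le> \<delta> * tau_form m u + C * L2_normsq u"
      using C hC by (auto simp: H_minus_def)
  qed
qed

end
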